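(* Let $A\in\mathbb{R}^{m\times n}$ satisfy the group restricted isometry property of order $2k$ with constant $\delta_{2k}\in(0,1)$, and let $\|\cdot\|_A$ be a norm on $\mathbb{R}^n$ that is decomposable with respect to $\mathcal{G}$. Let $f>0$ be a constant such that for every $h\in\mathbb{R}^n$, every $\Lambda_0\in\mathrm{GkS}$ and every optimal group $k$-sparse decomposition $\Lambda_1,\ldots,\Lambda_s$ of $h_{\mathcal{N}\setminus\Lambda_0}$ with respect to $\|\cdot\|_A$, $\sum_{j=2}^s\|h_{\Lambda_j}\|_2\le\frac1f\|h_{\mathcal{N}\setminus\Lambda_0}\|_A$. Let $h\in\mathbb{R}^n$, $\Lambda_0\in\mathrm{GkS}$, let $\Lambda_1,\ldots,\Lambda_s$ ($s\ge1$) be an optimal group $k$-sparse decomposition of $h_{\mathcal{N}\setminus\Lambda_0}$ with respect to $\|\cdot\|_A$, and let $\Lambda=\Lambda_0\cup\Lambda_1$. Then $$\|h_\Lambda\|_2\le\frac{\sqrt2\,\delta_{2k}}{f(1-\delta_{2k})}\|h_{\mathcal{N}\setminus\Lambda_0}\|_A+\frac{\sqrt{1+\delta_{2k}}}{1-\delta_{2k}}\|Ah\|_2 .$$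
   Context: Fix positive integers $n,k$, $\mathcal{N}=\{1,\ldots,n\}$, and a partition $\mathcal{G}=\{G_1,\ldots,G_g\}$ of $\mathcal{N}$ with $|G_i|\le k$. For $x\in\mathbb{R}^n$, $\Lambda\subseteq\mathcal{N}$: $(x_\Lambda)_i=x_i$ if $i\in\Lambda$, else $0$; $\mathrm{supp}(u)=\{i:u_i\ne0\}$; $G_S=\bigcup_{i\in S}G_i$. For an integer $t$, $\Lambda$ is group $t$-sparse if $\Lambda=G_S$ for some $S$ and $|\Lambda|\le t$; $\mathrm{GkS}$ is the collection of group $k$-sparse sets. A norm is decomposable w.r.t. $\mathcal{G}$ if $\|u+v\|=\|u\|+\|v\|$ whenever $\mathrm{supp}(u)\subseteq G_{S_u}$, $\mathrm{supp}(v)\subseteq G_{S_v}$ with $S_u\cap S_v=\emptyset$. $A$ satisfies the group restricted isometry property of order $2k$ with constant $\delta_{2k}$ if $(1-\delta_{2k})\|z\|_2^2\le\|Az\|_2^2\le(1+\delta_{2k})\|z\|_2^2$ for every $z$ whose support lies in some group $2k$-sparse set. Optimal group $k$-sparse decomposition of $v=h_{\mathcal{N}\setminus\Lambda_0}$ w.r.t. $\|\cdot\|_A$: pairwise disjoint group $k$-sparse sets $\Lambda_1,\ldots,\Lambda_s\subseteq\mathcal{N}\setminus\Lambda_0$ with union $\mathcal{N}\setminus\Lambda_0$, such that for each $i$, with $r_i=v-\sum_{j<i}v_{\Lambda_j}$, $\Lambda_i$ minimizes $\|r_i-(r_i)_\Lambda\|_A$ over group $k$-sparse $\Lambda\subseteq\mathcal{N}\setminus(\Lambda_0\cup\cdots\cup\Lambda_{i-1})$.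 *)

theory Defs
  imports "HOL-Analysis.Analysis"
begin

text \<open>Vectors in R^n are modelled as real^'n for a finite index type 'n (so n = CARD('n)).
  The restriction x_Lambda.\<close>
definition restr :: "'n::finite set \<Rightarrow> real^'n \<Rightarrow> real^'n" where
  "restr L x = (\<chi> i. if i \<in> L then x $ i else 0)"

definition supp :: "real^'n::finite \<Rightarrow> 'n set" where
  "supp u = {i. u $ i \<noteq> 0}"

definition group_partition :: "'n::finite set set \<Rightarrow> nat \<Rightarrow> bool" where
  "group_partition G k \<longleftrightarrow> (\<forall>g\<in>G. g \<noteq> {}) \<and>
     (\<forall>g\<in>G. \<forall>g'\<in>G. g \<noteq> g' \<longrightarrow> g \<inter> g' = {}) \<and> \<Union>G = UNIV \<and>
     (\<forall>g\<in>G. card g \<le> k)"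

definition group_sparse :: "'n::finite set set \<Rightarrow> nat \<Rightarrow> 'n set \<Rightarrow> bool" where
  "group_sparse G t L \<longleftrightarrow> (\<exists>S. S \<subseteq> G \<and> L = \<Union>S) \<and> card L \<le> t"

definition is_norm :: "(real^'n::finite \<Rightarrow> real) \<Rightarrow> bool" where
  "is_norm N \<longleftrightarrow> (\<forall>x. N x = 0 \<longleftrightarrow> x = 0) \<and> (\<forall>c x. N (c *\<^sub>R x) = \<bar>c\<bar> * N x) \<and>
     (\<forall>x y. N (x + y) \<le> N x + N y)"

definition decomposable :: "'n::finite set set \<Rightarrow> (real^'n \<Rightarrow> real) \<Rightarrow> bool" where
  "decomposable G N \<longleftrightarrow> (\<forall>u v Su Sv. Su \<subseteq> G \<longrightarrow> Sv \<subseteq> G \<longrightarrow> Su \<inter> Sv = {} \<longrightarrow>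
     supp u \<subseteq> \<Union>Su \<longrightarrow> supp v \<subseteq> \<Union>Sv \<longrightarrow> N (u + v) = N u + N v)"

definition group_RIP :: "'n::finite set set \<Rightarrow> nat \<Rightarrow> real^'n^'m \<Rightarrow> real \<Rightarrow> bool" where
  "group_RIP G k A d \<longleftrightarrow> (\<forall>z. (\<exists>L. group_sparse G (2*k) L \<and> supp z \<subseteq> L) \<longrightarrow>
      (1 - d) * (norm z)^2 \<le> (norm (A *v z))^2 \<and> (norm (A *v z))^2 \<le> (1 + d) * (norm z)^2)"

text \<open>Optimal group k-sparse decomposition Ls = [Lambda_1, ..., Lambda_s] of h restricted to
  the complement of L0 w.r.t. the norm N.\<close>
definition opt_decomp :: "'n::finite set set \<Rightarrow> nat \<Rightarrow> (real^'n \<Rightarrow> real) \<Rightarrow> real^'n \<Rightarrow> 'n set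
    \<Rightarrow> 'n set list \<Rightarrow> bool" where
  "opt_decomp G k N h L0 Ls \<longleftrightarrow>
     (let v = restr (- L0) h in
       (\<forall>i<length Ls. group_sparse G k (Ls ! i) \<and> Ls ! i \<subseteq> - L0) \<and>
       (\<forall>i<length Ls. \<forall>j<length Ls. i \<noteq> j \<longrightarrow> Ls ! i \<inter> Ls ! j = {}) \<and>
       \<Union>(set Ls) = - L0 \<and>
       (\<forall>i<length Ls.
          let r = v - (\<Sum>j<i. restr (Ls ! j) v);
              U = L0 \<union> (\<Union>j<i. Ls ! j)
          in \<forall>L. group_sparse G k L \<and> L \<subseteq> - U \<longrightarrow>
                 N (r - restr (Ls ! i) r) \<le> N (r - restr L r)))"

end

theory Submission imports Defs begin

lemma supp_restr: "supp (restr L x) \<subseteq> L"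
  by (auto simp: supp_def restr_def)

lemma inner_disj: assumes "supp u \<subseteq> L1" "supp v \<subseteq> L2" "L1 \<inter> L2 = {}"
  shows "inner u v = 0"
proof -
  have z: "\<And>i. u $ i * v $ i = 0" using assms by (auto simp: supp_def)
  show ?thesis by (simp add: inner_vec_def z)
qed

lemma gs_union: assumes "group_sparse G k L1" "group_sparse G k L2"
  shows "group_sparse G (2*k) (L1 \<union> L2)"
proof -
  obtain S1 where s1: "S1 \<subseteq> G" "L1 = \<Union>S1" and c1: "card L1 \<le> k"
    using assms(1) unfolding group_sparse_def by blast
  obtain S2 where s2: "S2 \<subseteq> G" "L2 = \<Union>S2" and c2: "card L2 \<le> k"
    using assms(2) unfolding group_sparse_def by blast
  have "S1 \<union> S2 \<subseteq> G" using s1 s2 by blast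
  moreover have "L1 \<union> L2 = \<Union>(S1 \<union> S2)" using s1 s2 by blast
  moreover have "card (L1 \<union> L2) \<le> 2*k"
  proof -
    have "card (L1 \<union> L2) \<le> card L1 + card L2" by (rule card_Un_le)
    also have "\<dots> \<le> k + k" using c1 c2 by (rule add_mono)
    finally show ?thesis by simp
  qed
  ultimately show ?thesis unfolding group_sparse_def by blast
qed

lemma supp_add: "supp (u + v) \<subseteq> supp u \<union> supp v" by (auto simp: supp_def)
lemma supp_diff: "supp (u - v) \<subseteq> supp u \<union> supp v" by (auto simp: supp_def)
lemma supp_scale: "supp (c *\<^sub>R u) \<subseteq> supp u" by (auto simp: supp_def)

lemma lin_aux: fixes x1 x2 n1 n2 p d :: real
  shows "x1 = n1 + 2*p + n2 \<Longrightarrow> x2 = n1 - 2*p + n2 \<Longrightarrow> x1 \<le> (1+d)*2 \<Longrightarrow> (1-d)*2 \<le> x2 \<Longrightarrow> p \<le> d"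
  by (simp add: algebra_simps)
lemma lin_aux2: fixes x1 x2 n1 n2 p d :: real
  shows "x1 = n1 + 2*p + n2 \<Longrightarrow> x2 = n1 - 2*p + n2 \<Longrightarrow> (1-d)*2 \<le> x1 \<Longrightarrow> x2 \<le> (1+d)*2 \<Longrightarrow> -p \<le> d"
  by (simp add: algebra_simps)

lemma RIP_unit:
  assumes rip: "group_RIP G k A d" and g1: "group_sparse G k L1" and g2: "group_sparse G k L2"
    and dj: "L1 \<inter> L2 = {}" and su: "supp a \<subseteq> L1" and sv: "supp b \<subseteq> L2"
    and na: "norm a = 1" and nb: "norm b = 1"
  shows "\<bar>inner (A *v a) (A *v b)\<bar> \<le> d"
proof -
  have gs: "group_sparse G (2*k) (L1 \<union> L2)" using gs_union[OF g1 g2] .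
  have ab: "inner a b = 0" using inner_disj[OF su sv dj] .
  have p: "supp (a + b) \<subseteq> L1 \<union> L2" using supp_add[of a b] su sv by auto
  have m: "supp (a - b) \<subseteq> L1 \<union> L2" using supp_diff[of a b] su sv by auto
  have aa: "inner a a = 1" "inner b b = 1" using na nb by (simp_all add: power2_norm_eq_inner[symmetric])
  have np: "(norm (a+b))^2 = 2" using ab aa
    by (simp add: power2_norm_eq_inner inner_add_left inner_add_right inner_commute)
  have nm: "(norm (a-b))^2 = 2" using ab aa
    by (simp add: power2_norm_eq_inner inner_diff_left inner_diff_right inner_commute)
  have R: "\<And>z L. group_sparse G (2*k) L \<Longrightarrow> supp z \<subseteq> L \<Longrightarrow>
      (1 - d) * (norm z)^2 \<le> (norm (A *v z))^2 \<and> (norm (A *v z))^2 \<le> (1 + d) * (norm z)^2"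
    using rip unfolding group_RIP_def by blast
  have rp: "(1 - d) * 2 \<le> (norm (A *v (a+b)))^2 \<and> (norm (A *v (a+b)))^2 \<le> (1 + d) * 2"
    using R[OF gs p] np by simp
  have rm: "(1 - d) * 2 \<le> (norm (A *v (a-b)))^2 \<and> (norm (A *v (a-b)))^2 \<le> (1 + d) * 2"
    using R[OF gs m] nm by simp
  have e1: "(norm (A *v (a+b)))^2 = (norm (A *v a))^2 + 2 * inner (A *v a) (A *v b) + (norm (A *v b))^2"
    by (simp add: matrix_vector_right_distrib power2_norm_eq_inner inner_add_left inner_add_right inner_commute)
  have e2: "(norm (A *v (a-b)))^2 = (norm (A *v a))^2 - 2 * inner (A *v a) (A *v b) + (norm (A *v b))^2"
    by (simp add: vec.diff power2_norm_eq_inner inner_diff_left inner_diff_right inner_commute)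
  have "inner (A *v a) (A *v b) \<le> d" by (rule lin_aux[OF e1 e2 conjunct2[OF rp] conjunct1[OF rm]])
  moreover have "- inner (A *v a) (A *v b) \<le> d" by (rule lin_aux2[OF e1 e2 conjunct1[OF rp] conjunct2[OF rm]])
  ultimately show ?thesis by linarith
qed

lemma RIP_inner:
  assumes rip: "group_RIP G k A d" and g1: "group_sparse G k L1" and g2: "group_sparse G k L2"
    and dj: "L1 \<inter> L2 = {}" and su: "supp u \<subseteq> L1" and sv: "supp v \<subseteq> L2"
  shows "\<bar>inner (A *v u) (A *v v)\<bar> \<le> d * norm u * norm v"
proof (cases "u = 0 \<or> v = 0")
  case True
  thus ?thesis by (auto simp: matrix_vector_mult_0_right)
next
  case False
  define a where "a = (1 / norm u) *\<^sub>R u"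
  define b where "b = (1 / norm v) *\<^sub>R v"
  have na: "norm a = 1" "norm b = 1" using False by (auto simp: a_def b_def)
  have s: "supp a \<subseteq> L1" "supp b \<subseteq> L2" unfolding a_def b_def using supp_scale su sv by blast+
  have u: "u = norm u *\<^sub>R a" "v = norm v *\<^sub>R b" using False by (auto simp: a_def b_def)
  have "inner (A *v u) (A *v v) = norm u * norm v * inner (A *v a) (A *v b)"
  proof -
    have "A *v u = norm u *\<^sub>R (A *v a)" using u(1) matrix_vector_mult_scaleR by metis
    moreover have "A *v v = norm v *\<^sub>R (A *v b)" using u(2) matrix_vector_mult_scaleR by metis
    ultimately show ?thesis by simp
  qed
  hence "\<bar>inner (A *v u) (A *v v)\<bar> = norm u * norm v * \<bar>inner (A *v a) (A *v b)\<bar>"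
    by (simp add: abs_mult)
  also have "\<dots> \<le> norm u * norm v * d"
    using RIP_unit[OF rip g1 g2 dj s na] by (simp add: mult_left_mono)
  finally show ?thesis by (simp add: mult_ac)
qed

lemma rhs_aux: fixes a c f q N M :: real assumes "f \<noteq> 0" "q \<noteq> 0"
  shows "a / (f * q) * N + c / q * M = (c * M + a * ((1 / f) * N)) / q"
  using assms by (simp add: field_simps)
lemma div_aux: fixes c z R :: real assumes "0 < z" "c * z^2 \<le> z * R" shows "c * z \<le> R"
proof -
  have "z * (c * z) \<le> z * R" using assms(2) by (simp add: power2_eq_square mult_ac)
  thus ?thesis using assms(1) by (rule mult_left_le_imp_le)
qed
lemma div_aux2: fixes c z T :: real assumes "0 < c" "c * z \<le> T" shows "z \<le> T / c"
  using assms by (simp add: pos_le_divide_eq mult.commute)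

lemma sq_aux: fixes a b :: real shows "(a+b)^2 \<le> 2*(a^2+b^2)"
proof -
  have "0 \<le> (a-b)^2" by simp
  thus ?thesis by (simp add: power2_eq_square algebra_simps)
qed

lemma norm_nonneg_N: assumes "is_norm N" shows "N x \<ge> 0"
proof -
  have "N 0 = 0" using assms by (simp add: is_norm_def)
  moreover have "N (-x) = N x" using assms unfolding is_norm_def
    by (metis abs_minus_cancel abs_one mult_1 scaleR_minus1_left)
  moreover have "N 0 \<le> N x + N (-x)" using assms unfolding is_norm_def by (metis add.right_inverse)
  ultimately show ?thesis by simp
qed

theorem lemma5p2:
  fixes A :: "real^'n::finite^'m::finite" and G :: "'n set set" and k :: nat
    and N :: "real^'n \<Rightarrow> real" and d f :: real
    and h :: "real^'n" and L0 :: "'n set" and Ls :: "'n set list"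
  assumes "k > 0" and "group_partition G k"
    and "group_RIP G k A d" and "0 < d" and "d < 1"
    and "is_norm N" and "decomposable G N"
    and "f > 0"
    and "\<forall>h' L0' Ls'. group_sparse G k L0' \<and> opt_decomp G k N h' L0' Ls' \<longrightarrow>
           (\<Sum>j\<in>{1..<length Ls'}. norm (restr (Ls' ! j) h')) \<le> (1 / f) * N (restr (- L0') h')"
    and "group_sparse G k L0"
    and "opt_decomp G k N h L0 Ls" and "Ls \<noteq> []"
  shows "norm (restr (L0 \<union> Ls ! 0) h)
           \<le> sqrt 2 * d / (f * (1 - d)) * N (restr (- L0) h)
             + sqrt (1 + d) / (1 - d) * norm (A *v h)"
proof -
  note rip = assms(3) and g0 = assms(10) and od = assms(11)
  define n where "n = length Ls"
  have n0: "0 < n" using assms(12) by (simp add: n_def)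
  define L1 where "L1 = Ls ! 0"
  define x where "x = restr L0 h"
  define y where "y = restr L1 h"
  define z where "z = restr (L0 \<union> L1) h"
  define w where "w = (\<lambda>j. restr (Ls ! j) h)"
  define Nv where "Nv = N (restr (- L0) h)"
  define S where "S = (\<Sum>j\<in>{1..<n}. norm (w j))"
  have gsj: "\<And>i. i < n \<Longrightarrow> group_sparse G k (Ls ! i) \<and> Ls ! i \<subseteq> - L0"
    using od unfolding opt_decomp_def Let_def n_def by blast
  have dj: "\<And>i j. i < n \<Longrightarrow> j < n \<Longrightarrow> i \<noteq> j \<Longrightarrow> Ls ! i \<inter> Ls ! j = {}"
    using od unfolding opt_decomp_def Let_def n_def by blast
  have un: "\<Union>(set Ls) = - L0"
    using od unfolding opt_decomp_def Let_def by blast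
  have g1: "group_sparse G k L1" using gsj[OF n0] by (simp add: L1_def)
  have d01: "L0 \<inter> L1 = {}" using gsj[OF n0] by (auto simp: L1_def)
  have SB: "S \<le> (1 / f) * Nv"
    using assms(9) g0 od unfolding S_def Nv_def w_def n_def by blast
  have Nv0: "Nv \<ge> 0" using norm_nonneg_N[OF assms(6)] by (simp add: Nv_def)
  have zxy: "z = x + y" using d01
    by (auto simp: vec_eq_iff z_def x_def y_def restr_def)
  have hdec: "h = z + (\<Sum>j\<in>{1..<n}. w j)"
  proof (subst vec_eq_iff, intro allI)
    fix i
    show "h $ i = (z + (\<Sum>j\<in>{1..<n}. w j)) $ i"
    proof (cases "i \<in> L0")
      case True
      have "\<And>j. j \<in> {1..<n} \<Longrightarrow> w j $ i = 0" using gsj True by (auto simp: w_def restr_def)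
      thus ?thesis using True by (simp add: sum_component z_def restr_def)
    next
      case False
      then obtain j0 where j0: "j0 < n" "i \<in> Ls ! j0" using un
        by (metis ComplI UnionE in_set_conv_nth n_def)
      have wc: "\<And>j. j \<in> {1..<n} \<Longrightarrow> w j $ i = (if j = j0 then h $ i else 0)"
        using dj j0 by (auto simp: w_def restr_def)
      have "(\<Sum>j\<in>{1..<n}. w j) $ i = (\<Sum>j\<in>{1..<n}. (if j = j0 then h $ i else 0))"
        unfolding sum_component using wc by (rule sum.cong[OF refl])
      also have "\<dots> = (if j0 \<in> {1..<n} then h $ i else 0)" by (rule sum.delta) simp
      finally have sc: "(\<Sum>j\<in>{1..<n}. w j) $ i = (if j0 \<in> {1..<n} then h $ i else 0)" .
      show ?thesis
      proof (cases "j0 = 0")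
        case True
        then show ?thesis using sc j0 False by (simp add: z_def restr_def L1_def)
      next
        case nz: False
        have "i \<notin> L1" using dj[of 0 j0] j0 nz n0 by (auto simp: L1_def)
        then show ?thesis using sc j0 False nz by (simp add: z_def restr_def)
      qed
    qed
  qed
  have Ahdec: "A *v h = A *v z + (\<Sum>j\<in>{1..<n}. A *v w j)"
    by (subst hdec) (simp add: matrix_vector_right_distrib vec.sum)
  define Az where "Az = A *v z"
  have e: "(norm Az)^2 = inner Az (A *v h) - (\<Sum>j\<in>{1..<n}. inner Az (A *v w j))"
    by (simp add: Ahdec power2_norm_eq_inner inner_add_right inner_sum_right Az_def)
  have bj: "- inner Az (A *v w j) \<le> d * (norm x + norm y) * norm (w j)" if j: "j \<in> {1..<n}" for j
  proof -
    have jn: "j < n" "j \<noteq> 0" using j by auto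
    have sw: "supp (w j) \<subseteq> Ls ! j" by (simp add: w_def supp_restr)
    have i1: "\<bar>inner (A *v x) (A *v w j)\<bar> \<le> d * norm x * norm (w j)"
      by (rule RIP_inner[OF rip g0 conjunct1[OF gsj[OF jn(1)]] _ _ sw])
         (use gsj[OF jn(1)] in \<open>auto simp: x_def supp_restr\<close>)
    have i2: "\<bar>inner (A *v y) (A *v w j)\<bar> \<le> d * norm y * norm (w j)"
      by (rule RIP_inner[OF rip g1 conjunct1[OF gsj[OF jn(1)]] _ _ sw])
         (use dj[of 0 j] jn n0 in \<open>auto simp: y_def L1_def supp_restr\<close>)
    have "inner Az (A *v w j) = inner (A *v x) (A *v w j) + inner (A *v y) (A *v w j)"
      by (simp add: Az_def zxy matrix_vector_right_distrib inner_add_left)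
    thus ?thesis using i1 i2 by (simp add: algebra_simps)
  qed
  have sumb: "- (\<Sum>j\<in>{1..<n}. inner Az (A *v w j)) \<le> d * (norm x + norm y) * S"
  proof -
    have "- (\<Sum>j\<in>{1..<n}. inner Az (A *v w j)) = (\<Sum>j\<in>{1..<n}. - inner Az (A *v w j))"
      by (simp add: sum_negf)
    also have "\<dots> \<le> (\<Sum>j\<in>{1..<n}. d * (norm x + norm y) * norm (w j))"
      by (rule sum_mono) (rule bj)
    also have "\<dots> = d * (norm x + norm y) * S" by (simp add: S_def sum_distrib_left)
    finally show ?thesis .
  qed
  have gz: "group_sparse G (2*k) (L0 \<union> L1)" by (rule gs_union[OF g0 g1])
  have Rz: "(1 - d) * (norm z)^2 \<le> (norm Az)^2 \<and> (norm Az)^2 \<le> (1 + d) * (norm z)^2"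
    using rip gz unfolding group_RIP_def Az_def z_def by (meson supp_restr)
  have Azb: "norm Az \<le> sqrt (1 + d) * norm z"
  proof (rule power2_le_imp_le)
    show "(norm Az)^2 \<le> (sqrt (1 + d) * norm z)^2"
      using Rz assms(4) by (simp add: power_mult_distrib)
    show "0 \<le> sqrt (1 + d) * norm z" using assms(4) by simp
  qed
  have xyz: "norm x + norm y \<le> sqrt 2 * norm z"
  proof (rule power2_le_imp_le)
    have xy0: "inner x y = 0"
      by (rule inner_disj[OF _ _ d01]) (simp_all add: x_def y_def supp_restr)
    have "(norm z)^2 = (norm x)^2 + (norm y)^2"
      by (simp add: zxy power2_norm_eq_inner inner_add_left inner_add_right xy0 inner_commute)
    moreover have "(norm x + norm y)^2 \<le> 2 * ((norm x)^2 + (norm y)^2)"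
      by (rule sq_aux)
    ultimately show "(norm x + norm y)^2 \<le> (sqrt 2 * norm z)^2"
      by (simp add: power_mult_distrib)
    show "0 \<le> sqrt 2 * norm z" by simp
  qed
  have S0: "S \<ge> 0" unfolding S_def by (simp add: sum_nonneg)
  have main: "(1 - d) * (norm z)^2 \<le> norm z * (sqrt (1 + d) * norm (A *v h) + sqrt 2 * d * S)"
  proof -
    have "inner Az (A *v h) \<le> norm Az * norm (A *v h)" by (rule norm_cauchy_schwarz)
    also have "\<dots> \<le> sqrt (1 + d) * norm z * norm (A *v h)"
      using Azb by (simp add: mult_right_mono)
    finally have a1: "inner Az (A *v h) \<le> sqrt (1 + d) * norm z * norm (A *v h)" .
    have a2: "d * (norm x + norm y) * S \<le> d * (sqrt 2 * norm z) * S"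
      using xyz assms(4) S0 by (simp add: mult_left_mono mult_right_mono)
    have "(1 - d) * (norm z)^2 \<le> sqrt (1 + d) * norm z * norm (A *v h) + d * (sqrt 2 * norm z) * S"
      using Rz e a1 a2 sumb by linarith
    thus ?thesis by (simp add: algebra_simps)
  qed
  have Sf: "sqrt 2 * d * S \<le> sqrt 2 * d * ((1 / f) * Nv)"
    by (rule mult_left_mono[OF SB]) (use assms(4) in simp)
  have rhs: "sqrt 2 * d / (f * (1 - d)) * Nv + sqrt (1 + d) / (1 - d) * norm (A *v h)
      = (sqrt (1 + d) * norm (A *v h) + sqrt 2 * d * ((1 / f) * Nv)) / (1 - d)"
    by (rule rhs_aux) (use assms(5) assms(8) in auto)
  have zz: "restr (L0 \<union> Ls ! 0) h = z" by (simp add: z_def L1_def)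
  have C: "norm z \<le> sqrt 2 * d / (f * (1 - d)) * Nv + sqrt (1 + d) / (1 - d) * norm (A *v h)"
  proof (cases "norm z = 0")
    case True
    have "0 \<le> sqrt 2 * d / (f * (1 - d)) * Nv + sqrt (1 + d) / (1 - d) * norm (A *v h)"
      using assms(4,5,8) Nv0 by simp
    thus ?thesis using True by simp
  next
    case False
    hence pz: "norm z > 0" by simp
    have "(1 - d) * norm z \<le> sqrt (1 + d) * norm (A *v h) + sqrt 2 * d * S"
      by (rule div_aux[OF pz main])
    hence "(1 - d) * norm z \<le> sqrt (1 + d) * norm (A *v h) + sqrt 2 * d * ((1 / f) * Nv)"
      using Sf by linarith
    moreover have dpos: "0 < 1 - d" using assms(5) by simp
    ultimately have "norm z \<le> (sqrt (1 + d) * norm (A *v h) + sqrt 2 * d * ((1 / f) * Nv)) / (1 - d)"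
      using div_aux2 by blast
    thus ?thesis unfolding rhs .
  qed
  show ?thesis using C by (simp only: zz Nv_def)
qed

end
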